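(* Let $(\Omega(\mathcal{A}),\mathrm{d},\bar{\mathrm{d}})$ be a bidifferential graded algebra, and let $M,N\ge 1$. Let $X$ be an $N\times N$ matrix and $Y$ an $M\times N$ matrix with entries in $\mathcal{A}$, let $P$ be an $N\times N$ matrix and $R$ an $N\times N$ matrix with entries in $\mathcal{A}$, and let $Q$ be an $N\times M$ matrix with entries in $\mathcal{A}$, such that $\mathrm{d}R=0$ and $\mathrm{d}Q=0$. Suppose that $$\bar{\mathrm{d}}X=(\mathrm{d}X)\,P,\qquad \bar{\mathrm{d}}Y=(\mathrm{d}Y)\,P,\qquad R\,X+Q\,Y=X\,P,$$ and that $X$ is invertible. Then $\Phi:=Y X^{-1}$ satisfies $$\bar{\mathrm{d}}\,\mathrm{d}\,\Phi=(\mathrm{d}\Phi)\,Q\,(\mathrm{d}\Phi).$$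
   Context: $\mathcal{A}$ is a unital associative algebra over $\mathbb{C}$ with identity $I$. A bidifferential graded algebra $(\Omega(\mathcal{A}),\mathrm{d},\bar{\mathrm{d}})$ consists of a graded associative algebra $\Omega(\mathcal{A})=\bigoplus_{r\ge 0}\Omega^r(\mathcal{A})$ with $\Omega^0(\mathcal{A})=\mathcal{A}$ (each $\Omega^r(\mathcal{A})$ an $\mathcal{A}$-bimodule) together with two linear maps $\mathrm{d},\bar{\mathrm{d}}:\Omega^r(\mathcal{A})\to\Omega^{r+1}(\mathcal{A})$ satisfying the graded Leibniz rule $\mathrm{d}(\alpha\beta)=(\mathrm{d}\alpha)\beta+(-1)^r\alpha\,\mathrm{d}\beta$ for $\alpha\in\Omega^r(\mathcal{A})$ (and likewise for $\bar{\mathrm{d}}$), and $\mathrm{d}^2=\bar{\mathrm{d}}^2=0$, $\mathrm{d}\bar{\mathrm{d}}+\bar{\mathrm{d}}\mathrm{d}=0$. The maps $\mathrm{d},\bar{\mathrm{d}}$ are applied entrywise to matrices with entries in $\Omega(\mathcal{A})$, and products of such matrices use the matrix product together with the product of $\Omega(\mathcal{A})$. Inverses are taken in the algebra of square matrices over $\mathcal{A}$. *)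

theory Defs
  imports Complex_Main "Jordan_Normal_Form.Matrix"
begin

text \<open>The graded algebra Omega(A) is modelled as a unital ring 'w with a
  complex scalar multiplication making it a C-algebra, together with
  the family of homogeneous subspaces Omega r (r :: nat) whose direct sum is
  the whole of 'w.  The base algebra A is Omega 0.\<close>

definition bdga ::
  "(complex \<Rightarrow> 'w::ring_1 \<Rightarrow> 'w) \<Rightarrow> (nat \<Rightarrow> 'w set) \<Rightarrow> ('w \<Rightarrow> 'w) \<Rightarrow> ('w \<Rightarrow> 'w) \<Rightarrow> bool"
where
  "bdga scale Omega d db \<longleftrightarrow>
     \<comment> \<open>complex algebra structure\<close>
     Modules.module scale \<and>
     (\<forall>c a b. scale c (a * b) = scale c a * b \<and> scale c (a * b) = a * scale c b) \<and>
     \<comment> \<open>grading: subspaces, multiplicative, unit in degree 0, direct sum\<close>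
     (\<forall>r. Modules.module.subspace scale (Omega r)) \<and>
     (1 \<in> Omega 0) \<and>
     (\<forall>r s a b. a \<in> Omega r \<longrightarrow> b \<in> Omega s \<longrightarrow> a * b \<in> Omega (r + s)) \<and>
     (\<forall>w. \<exists>n x. (\<forall>r<n. x r \<in> Omega r) \<and> w = (\<Sum>r<n. x r)) \<and>
     (\<forall>n x. (\<forall>r<n. x r \<in> Omega r) \<and> (\<Sum>r<n. x r) = 0 \<longrightarrow> (\<forall>r<n. x r = 0)) \<and>
     \<comment> \<open>d and db: linear maps of degree +1\<close>
     (\<forall>a b. d (a + b) = d a + d b \<and> db (a + b) = db a + db b) \<and>
     (\<forall>c a. d (scale c a) = scale c (d a) \<and> db (scale c a) = scale c (db a)) \<and>
     (\<forall>r a. a \<in> Omega r \<longrightarrow> d a \<in> Omega (Suc r) \<and> db a \<in> Omega (Suc r)) \<and>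
     \<comment> \<open>graded Leibniz rule\<close>
     (\<forall>r a b. a \<in> Omega r \<longrightarrow>
        d (a * b) = d a * b + (-1) ^ r * a * d b \<and>
        db (a * b) = db a * b + (-1) ^ r * a * db b) \<and>
     \<comment> \<open>d^2 = db^2 = 0, d db + db d = 0\<close>
     (\<forall>a. d (d a) = 0 \<and> db (db a) = 0 \<and> d (db a) + db (d a) = 0)"

definition entries_in :: "'a set \<Rightarrow> nat \<Rightarrow> nat \<Rightarrow> 'a mat \<Rightarrow> bool" where
  "entries_in S m n X \<longleftrightarrow> X \<in> carrier_mat m n \<and> (\<forall>i<m. \<forall>j<n. X $$ (i, j) \<in> S)"

end

theory Submission imports Defs begin

lemma add_zero: fixes f :: "'w::ring_1 \<Rightarrow> 'w" assumes "\<forall>a b. f (a + b) = f a + f b" shows "f 0 = 0"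
  using assms[rule_format, of 0 0] by (metis add.right_neutral add_left_cancel)

lemma add_neg: fixes f :: "'w::ring_1 \<Rightarrow> 'w" assumes "\<forall>a b. f (a + b) = f a + f b" shows "f (- a) = - f a"
proof -
  have "f (a + - a) = f a + f (- a)" using assms by blast
  then show ?thesis using add_zero[OF assms] by (simp add: eq_neg_iff_add_eq_0 add.commute)
qed

lemma add_sum: fixes f :: "'w::ring_1 \<Rightarrow> 'w" assumes "\<forall>a b. f (a + b) = f a + f b"
  shows "f (sum g S) = (\<Sum>x\<in>S. f (g x))"
  by (induction S rule: infinite_finite_induct) (auto simp: add_zero[OF assms] assms)

lemma map_mat_add: fixes f :: "'w::ring_1 \<Rightarrow> 'w" assumes "\<forall>a b. f (a + b) = f a + f b"
  and "A \<in> carrier_mat n m" "B \<in> carrier_mat n m"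
  shows "map_mat f (A + B) = map_mat f A + map_mat f B"
  using assms by (intro eq_matI) auto

lemma map_mat_neg: fixes f :: "'w::ring_1 \<Rightarrow> 'w" assumes "\<forall>a b. f (a + b) = f a + f b"
  shows "map_mat f (- A) = - map_mat f A"
  using assms by (intro eq_matI) (auto simp: add_neg)

lemma mat_leib: fixes f :: "'w::ring_1 \<Rightarrow> 'w" assumes add: "\<forall>a b. f (a + b) = f a + f b"
  and leib: "\<forall>a b. a \<in> S \<longrightarrow> f (a * b) = f a * b + c * a * f b"
  and A: "entries_in S n m A" and B: "B \<in> carrier_mat m k"
  shows "map_mat f (A * B) = map_mat f A * B + map_mat (\<lambda>x. c * x) A * map_mat f B"
proof (intro eq_matI)
  have Ac: "A \<in> carrier_mat n m" using A unfolding entries_in_def by auto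
  fix i j assume i: "i < dim_row (map_mat f A * B + map_mat ((*) c) A * map_mat f B)"
    and j: "j < dim_col (map_mat f A * B + map_mat ((*) c) A * map_mat f B)"
  have ij: "i < n" "j < k" using i j Ac B by auto
  have "map_mat f (A * B) $$ (i, j) = f (\<Sum>l\<in>{0..<m}. A $$ (i,l) * B $$ (l,j))"
    using ij Ac B by (simp add: scalar_prod_def)
  also have "\<dots> = (\<Sum>l\<in>{0..<m}. f (A $$ (i,l)) * B $$ (l,j) + c * A $$ (i,l) * f (B $$ (l,j)))"
    unfolding add_sum[OF add] using leib A ij unfolding entries_in_def by (intro sum.cong) auto
  also have "\<dots> = (map_mat f A * B + map_mat ((*) c) A * map_mat f B) $$ (i, j)"
    using ij Ac B by (simp add: scalar_prod_def sum.distrib mult.assoc)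
  finally show "map_mat f (A * B) $$ (i, j) = (map_mat f A * B + map_mat ((*) c) A * map_mat f B) $$ (i, j)" .
qed (insert A B, auto simp: entries_in_def)


lemma entries_carrier: "entries_in S n m A \<Longrightarrow> A \<in> carrier_mat n m"
  unfolding entries_in_def by auto

lemma entries_mult:
  assumes sub: "\<forall>r. Modules.module.subspace scale (Omega r)" and mod: "Modules.module scale"
  and mul: "\<forall>r s a b. a \<in> Omega r \<longrightarrow> b \<in> Omega s \<longrightarrow> a * b \<in> Omega (r + s)"
  and A: "entries_in (Omega r) n m A" and B: "entries_in (Omega s) m k (B::'w::ring_1 mat)"
  shows "entries_in (Omega (r+s)) n k (A * B)"
  unfolding entries_in_def
proof (intro conjI allI impI)
  show "A * B \<in> carrier_mat n k" using A B by (auto simp: entries_in_def)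
  fix i j assume "i < n" "j < k"
  then show "(A * B) $$ (i, j) \<in> Omega (r + s)"
    using A B mul unfolding entries_in_def
    by (auto simp: scalar_prod_def intro!: Modules.module.subspace_sum[OF mod sub[rule_format]])
qed

lemma entries_map:
  assumes "\<forall>a. a \<in> S \<longrightarrow> f a \<in> T" and "entries_in S n m A"
  shows "entries_in T n m (map_mat f A)"
  using assms unfolding entries_in_def by auto


lemma sum_zero_neg:
  fixes A C :: "'w::ring_1 mat"
  assumes "A \<in> carrier_mat n m" "C \<in> carrier_mat n m" "A + C = 0\<^sub>m n m"
  shows "C = - A"
proof (intro eq_matI)
  fix i j assume "i < dim_row (- A)" "j < dim_col (- A)"
  then have "(A + C) $$ (i,j) = 0" using assms by (subst assms(3)) simp
  then have "A $$ (i,j) + C $$ (i,j) = 0" using assms(1,2) \<open>i < _\<close> \<open>j < _\<close> by simp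
  then show "C $$ (i,j) = (- A) $$ (i,j)" using assms(1,2) \<open>i < _\<close> \<open>j < _\<close>
    by (simp add: eq_neg_iff_add_eq_0 add.commute)
qed (insert assms, auto)

lemma assoc4:
  fixes A :: "'a::semiring_0 mat"
  assumes "A \<in> carrier_mat n1 n2" "B \<in> carrier_mat n2 n3" "C \<in> carrier_mat n3 n4" "D \<in> carrier_mat n4 n5"
  shows "A * B * C * D = A * (B * (C * D))"
proof -
  have "A * B * C * D = A * B * (C * D)" using assms by (intro assoc_mult_mat[of _ n1 n3]) auto
  also have "\<dots> = A * (B * (C * D))" using assms by (intro assoc_mult_mat[of _ n1 n2 _ n3 _ n5]) auto
  finally show ?thesis .
qed

theorem theorem1:
  fixes scale :: "complex \<Rightarrow> 'w::ring_1 \<Rightarrow> 'w"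
    and Omega :: "nat \<Rightarrow> 'w set"
    and d db :: "'w \<Rightarrow> 'w"
    and M N :: nat
    and X P R Xinv :: "'w mat" and Y Q :: "'w mat"
  assumes "bdga scale Omega d db"
    and "M \<ge> 1" and "N \<ge> 1"
    and "entries_in (Omega 0) N N X"
    and "entries_in (Omega 0) M N Y"
    and "entries_in (Omega 0) N N P"
    and "entries_in (Omega 0) N N R"
    and "entries_in (Omega 0) N M Q"
    and "map_mat d R = 0\<^sub>m N N"
    and "map_mat d Q = 0\<^sub>m N M"
    and "map_mat db X = map_mat d X * P"
    and "map_mat db Y = map_mat d Y * P"
    and "R * X + Q * Y = X * P"
    and "entries_in (Omega 0) N N Xinv"
    and "X * Xinv = 1\<^sub>m N" and "Xinv * X = 1\<^sub>m N"
  shows "map_mat db (map_mat d (Y * Xinv))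
           = map_mat d (Y * Xinv) * Q * map_mat d (Y * Xinv)"
proof -
  note bd = assms(1)[unfolded bdga_def]
  have mod: "Modules.module scale" by (insert bd, elim conjE, assumption)
  have sub: "\<forall>r. Modules.module.subspace scale (Omega r)" by (insert bd, elim conjE, assumption)
  have mul: "\<forall>r s a b. a \<in> Omega r \<longrightarrow> b \<in> Omega s \<longrightarrow> a * b \<in> Omega (r + s)" by (insert bd, elim conjE, assumption)
  have adds: "\<forall>a b. d (a + b) = d a + d b \<and> db (a + b) = db a + db b" by (insert bd, elim conjE, assumption)
  have dadd: "\<forall>a b. d (a + b) = d a + d b" using adds by simp
  have dbadd: "\<forall>a b. db (a + b) = db a + db b" using adds by simp
  have degs: "\<forall>r a. a \<in> Omega r \<longrightarrow> d a \<in> Omega (Suc r) \<and> db a \<in> Omega (Suc r)" by (insert bd, elim conjE, assumption)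
  have ddeg: "\<forall>a. a \<in> Omega 0 \<longrightarrow> d a \<in> Omega 1" using degs by simp
  have lgs: "\<forall>r a b. a \<in> Omega r \<longrightarrow>
        d (a * b) = d a * b + (-1) ^ r * a * d b \<and>
        db (a * b) = db a * b + (-1) ^ r * a * db b" by (insert bd, elim conjE, assumption)
  have lg: "\<And>r a b. a \<in> Omega r \<Longrightarrow> d (a * b) = d a * b + (-1) ^ r * a * d b \<and>
        db (a * b) = db a * b + (-1) ^ r * a * db b" using lgs by blast
  have ld0: "\<forall>a b. a \<in> Omega 0 \<longrightarrow> d (a * b) = d a * b + 1 * a * d b" using lg[of _ 0] by simp
  have ldb0: "\<forall>a b. a \<in> Omega 0 \<longrightarrow> db (a * b) = db a * b + 1 * a * db b" using lg[of _ 0] by simp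
  have ld1: "\<forall>a b. a \<in> Omega 1 \<longrightarrow> d (a * b) = d a * b + (-1) * a * d b" using lg[of _ 1] by simp
  have sq: "\<forall>a. d (d a) = 0 \<and> db (db a) = 0 \<and> d (db a) + db (d a) = 0" by (insert bd, elim conjE, assumption)
  have dd: "\<And>a. d (d a) = 0" using sq by simp
  have dbd: "\<And>a. db (d a) = - d (db a)"
  proof -
    fix a have "d (db a) + db (d a) = 0" using sq by simp
    then show "db (d a) = - d (db a)" by (simp add: eq_neg_iff_add_eq_0 add.commute)
  qed
  have one0: "(1::'w) \<in> Omega 0" by (insert bd, elim conjE, assumption)
  have d1: "d 1 = 0" using ld0[rule_format, OF one0, of 1] by simp
  have db1: "db 1 = 0" using ldb0[rule_format, OF one0, of 1] by simp
  have d0: "d 0 = 0" by (rule add_zero[OF dadd])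
  have db0: "db 0 = 0" by (rule add_zero[OF dbadd])
  have one: "\<And>A. map_mat ((*) (1::'w)) A = A" "\<And>A. map_mat (\<lambda>x::'w. x) A = A" by (intro eq_matI; auto)+
  have mone: "\<And>A. map_mat ((*) (-1::'w)) A = - A" "\<And>A. map_mat (\<lambda>x::'w. - x) A = - A" "\<And>A. map_mat (uminus::'w\<Rightarrow>'w) A = - A" by (intro eq_matI; auto)+
  define U where "U = Xinv"
  define D where "D = map_mat d"
  define B where "B = map_mat db"
  define F where "F = Y * U"
  have eX: "entries_in (Omega 0) N N X" and eY: "entries_in (Omega 0) M N Y"
    and eP: "entries_in (Omega 0) N N P" and eR: "entries_in (Omega 0) N N R"
    and eQ: "entries_in (Omega 0) N M Q" and eU: "entries_in (Omega 0) N N U"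
    using assms U_def by auto
  have cX: "X \<in> carrier_mat N N" and cY: "Y \<in> carrier_mat M N" and cP: "P \<in> carrier_mat N N"
    and cR: "R \<in> carrier_mat N N" and cQ: "Q \<in> carrier_mat N M" and cU: "U \<in> carrier_mat N N"
    using eX eY eP eR eQ eU entries_carrier by blast+
  have XU: "X * U = 1\<^sub>m N" and UX: "U * X = 1\<^sub>m N" using assms U_def by auto
  have eF: "entries_in (Omega 0) M N F" using entries_mult[OF sub mod mul eY eU] F_def by simp
  have cF: "F \<in> carrier_mat M N" using eF entries_carrier by blast
  have eDX: "entries_in (Omega 1) N N (D X)" using entries_map[OF ddeg eX] D_def by simp
  have eDY: "entries_in (Omega 1) M N (D Y)" using entries_map[OF ddeg eY] D_def by simp
  have eDF: "entries_in (Omega 1) M N (D F)" using entries_map[OF ddeg eF] D_def by simp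
  have eDFQ: "entries_in (Omega 1) M M (D F * Q)" using entries_mult[OF sub mod mul eDF eQ] by simp
  have cDX: "D X \<in> carrier_mat N N" and cDY: "D Y \<in> carrier_mat M N" and cDF: "D F \<in> carrier_mat M N"
    and cDU: "D U \<in> carrier_mat N N" and cBU: "B U \<in> carrier_mat N N"
    using cX cY cF cU D_def B_def by auto
  have L0: "\<And>A C n m k. entries_in (Omega 0) n m A \<Longrightarrow> C \<in> carrier_mat m k \<Longrightarrow> D (A * C) = D A * C + A * D C"
    using mat_leib[OF dadd ld0] one D_def by simp
  have Lb0: "\<And>A C n m k. entries_in (Omega 0) n m A \<Longrightarrow> C \<in> carrier_mat m k \<Longrightarrow> B (A * C) = B A * C + A * B C"
    using mat_leib[OF dbadd ldb0] one B_def by simp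
  have L1: "\<And>A C n m k. entries_in (Omega 1) n m A \<Longrightarrow> C \<in> carrier_mat m k \<Longrightarrow> D (A * C) = D A * C + - (A * D C)"
  proof -
    fix A C :: "'w mat" and n m k :: nat assume a: "entries_in (Omega 1) n m A" "C \<in> carrier_mat m k"
    have "D (A * C) = D A * C + - A * D C" using mat_leib[OF dadd ld1 a] mone D_def by simp
    then show "D (A * C) = D A * C + - (A * D C)" using a entries_carrier[OF a(1)] D_def by simp
  qed
  have D1: "D (1\<^sub>m N) = 0\<^sub>m N N" unfolding D_def by (intro eq_matI) (auto simp: d1 d0)
  have B1: "B (1\<^sub>m N) = 0\<^sub>m N N" unfolding B_def by (intro eq_matI) (auto simp: db1 db0)
  have "D X * U + X * D U = 0\<^sub>m N N" using L0[OF eX cU] XU D1 by simp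
  hence XDU: "X * D U = - (D X * U)" using cX cU cDX cDU
    by (intro sum_zero_neg[of _ N N]) auto
  have DU: "D U = - (U * (D X * U))"
  proof -
    have "D U = (U * X) * D U" using UX cDU by simp
    also have "\<dots> = U * (X * D U)" using cU cX cDU by simp
    also have "\<dots> = - (U * (D X * U))" using XDU cU cX cDX by simp
    finally show ?thesis .
  qed
  have "B X * U + X * B U = 0\<^sub>m N N" using Lb0[OF eX cU] XU B1 by simp
  hence XBU: "X * B U = - (B X * U)" using cX cU cBU B_def
    by (intro sum_zero_neg[of _ N N]) auto
  have BU: "B U = - (U * (B X * U))"
  proof -
    have "B U = (U * X) * B U" using UX cBU by simp
    also have "\<dots> = U * (X * B U)" using cU cX cBU by simp
    also have "\<dots> = - (U * (B X * U))" using XBU cU cX cDX B_def by simp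
    finally show ?thesis .
  qed
  have cBX: "B X = D X * P" and cBY: "B Y = D Y * P" using assms B_def D_def by auto
  have cDXU: "D X * U \<in> carrier_mat N N" using cDX cU by simp
  define A where "A = D Y + - (F * D X)"
  have cA: "A \<in> carrier_mat M N" using cDY cF cDX A_def by simp
  have DF0: "D F = D Y * U + Y * D U" using L0[OF eY cU] F_def by simp
  have DF: "D F = A * U"
  proof -
    have "A * U = D Y * U + (- (F * D X)) * U" unfolding A_def
      using cDY cF cDX cU by (simp add: add_mult_distrib_mat[of _ M N])
    also have "(- (F * D X)) * U = - (Y * U * D X * U)" unfolding F_def
      using cY cU cDX by simp
    also have "Y * U * D X * U = Y * (U * (D X * U))" using assoc4[OF cY cU cDX cU] .
    also have "- (Y * (U * (D X * U))) = Y * D U" unfolding DU using cY cU cDX by simp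
    finally show ?thesis using DF0 by simp
  qed
  have BF0: "B F = B Y * U + Y * B U" using Lb0[OF eY cU] F_def by simp
  have BF1: "B F = A * (P * U)"
  proof -
    have "A * (P * U) = D Y * (P * U) + (- (F * D X)) * (P * U)" unfolding A_def
      by (rule add_mult_distrib_mat[of _ M N _ _ N]) (insert cDY cF cDX cU cP, auto)
    also have "D Y * (P * U) = B Y * U" using cBY cDY cP cU by simp
    also have "(- (F * D X)) * (P * U) = - (Y * U * D X * (P * U))" unfolding F_def
      using cY cU cDX cP by simp
    also have "Y * U * D X * (P * U) = Y * (U * (D X * (P * U)))"
      using assoc4[OF cY cU cDX mult_carrier_mat[OF cP cU]] .
    also have "D X * (P * U) = D X * P * U" using cDX cP cU by simp
    also have "- (Y * (U * (D X * P * U))) = Y * B U" unfolding BU cBX using cY cU cDX cP by simp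
    finally show ?thesis using BF0 by simp
  qed
  have PU: "P * U = U * R + U * (Q * F)"
  proof -
    have cRX: "R * X \<in> carrier_mat N N" and cQY: "Q * Y \<in> carrier_mat N N" using cR cX cQ cY by auto
    have "U * (X * P) = (U * X) * P" using assoc_mult_mat[OF cU cX cP] by simp
    also have "\<dots> = P" unfolding UX using cP by simp
    finally have e1: "U * (X * P) = P" .
    have "P * U = U * (R * X + Q * Y) * U" unfolding assms(13) e1 ..
    also have "U * (R * X + Q * Y) = U * (R * X) + U * (Q * Y)"
      by (rule mult_add_distrib_mat[OF cU cRX cQY])
    also have "(U * (R * X) + U * (Q * Y)) * U = U * (R * X) * U + U * (Q * Y) * U"
      by (rule add_mult_distrib_mat[OF mult_carrier_mat[OF cU cRX] mult_carrier_mat[OF cU cQY] cU])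
    also have "U * (R * X) * U = U * (R * (X * U))"
      unfolding assoc_mult_mat[OF cU cRX cU] assoc_mult_mat[OF cR cX cU] ..
    also have "U * (Q * Y) * U = U * (Q * F)" unfolding F_def
      unfolding assoc_mult_mat[OF cU cQY cU] assoc_mult_mat[OF cQ cY cU] ..
    finally show ?thesis unfolding XU using cR by simp
  qed
  have BF: "B F = D F * R + D F * Q * F"
  proof -
    have "B F = A * (U * R) + A * (U * (Q * F))" unfolding BF1 PU
      by (rule mult_add_distrib_mat[of _ M N _ N]) (insert cA cU cR cQ cF, auto)
    also have "A * (U * R) = D F * R" using DF cA cU cR by simp
    also have "A * (U * (Q * F)) = D F * Q * F" unfolding DF by (rule assoc4[OF cA cU cQ cF, symmetric])
    finally show ?thesis .
  qed
  have cDFQ: "D F * Q \<in> carrier_mat M M" using cDF cQ by simp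
  have DDF: "\<And>n m. D F \<in> carrier_mat n m \<Longrightarrow> D (D F) = 0\<^sub>m n m"
    unfolding D_def by (intro eq_matI) (auto simp: dd)
  have DR: "D R = 0\<^sub>m N N" and DQ: "D Q = 0\<^sub>m N M" using assms D_def by auto
  have T1: "D (D F * R) = 0\<^sub>m M N"
  proof -
    have "D (D F * R) = D (D F) * R + - (D F * D R)" by (rule L1[OF eDF cR])
    then show ?thesis unfolding DDF[OF cDF] DR using cR cDF by (intro eq_matI) auto
  qed
  have T2: "D (D F * Q) = 0\<^sub>m M M"
  proof -
    have "D (D F * Q) = D (D F) * Q + - (D F * D Q)" by (rule L1[OF eDF cQ])
    then show ?thesis unfolding DDF[OF cDF] DQ using cQ cDF by (intro eq_matI) auto
  qed
  have T3: "D (D F * Q * F) = - (D F * Q * D F)"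
  proof -
    have "D (D F * Q * F) = D (D F * Q) * F + - (D F * Q * D F)" by (rule L1[OF eDFQ cF])
    then show ?thesis unfolding T2 using cF cDF cQ by (intro eq_matI) auto
  qed
  have "D (B F) = D (D F * R) + D (D F * Q * F)" unfolding BF D_def
    by (rule map_mat_add[OF dadd]) (insert cDF cR cQ cF, auto)
  also have "\<dots> = - (D F * Q * D F)" unfolding T1 T3 using cF cDF cQ by (intro eq_matI) auto
  finally have DBF: "D (B F) = - (D F * Q * D F)" .
  have "B (D F) = - D (B F)" unfolding B_def D_def by (intro eq_matI) (auto simp: dbd)
  also have "\<dots> = D F * Q * D F" unfolding DBF using cF cDF cQ by (intro eq_matI) auto
  finally show ?thesis unfolding B_def D_def F_def U_def .
qed
end
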